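(* Let $(\mathbb{H}, \langle\cdot,\cdot\rangle)$ be a separable real Hilbert space of functions $\mathcal{X} \to \mathbb{R}$, and let $G$ be a group acting linearly on $\mathbb{H}$ from the left such that $\langle g f_1, g f_2\rangle = \langle f_1, f_2\rangle$ for all $f_1, f_2 \in \mathbb{H}$ and $g \in G$. Let $T\colon \mathbb{H}\to\mathbb{H}$ be a bounded linear operator which is compact. Then there exist a sequence of continuous (possibly nonlinear) operators $E_n\colon \mathbb{H}^{1+2n}\to \mathbb{H}$, $n\ge 1$, and a sequence of functions $(t_n)_{n\ge1}\subseteq \mathbb{H}$ such that every $E_n$ is $G$-equivariant, i.e. \[ E_n(g f_1, g f_2, \ldots, g f_{2n+1}) = g\,E_n(f_1, f_2, \ldots, f_{2n+1}) \quad\text{for all } g\in G \text{ and } f_1,\ldots,f_{2n+1}\in\mathbb{H}, \] and \[ \big\| T - E_n(\,\cdot\,, t_1, \ldots, t_{2n}) \big\| \to 0 \quad (n\to\infty), \] where $\|S\| = \sup_{f\in\mathbb{H},\,\|f\|\le 1}\|S(f)\|$ denotes the operator norm of a map $S\colon\mathbb{H}\to\mathbb{H}$.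
   Context: A bounded linear operator on $\mathbb{H}$ is compact if the image of every bounded set is relatively compact. The group action is linear: $g(f_1+f_2) = gf_1 + gf_2$ (and $g(\lambda f)=\lambda gf$), and it is a left action ($ef = f$, $h(gf) = (hg)f$). *)

theory Defs
  imports "HOL-Analysis.Analysis" "HOL-Algebra.Group"
begin

definition compact_operator :: "('h::real_normed_vector \<Rightarrow> 'h) \<Rightarrow> bool" where
  "compact_operator T \<longleftrightarrow> bounded_linear T \<and> (\<forall>B. bounded B \<longrightarrow> compact (closure (T ` B)))"

definition nl_opnorm :: "('h::real_normed_vector \<Rightarrow> 'h) \<Rightarrow> ereal" where
  "nl_opnorm S = (SUP f \<in> cball 0 1. ereal (norm (S f)))"

text \<open>Elements of H^k are represented as lists of length k; continuity w.r.t. the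
  product topology on H^k.\<close>
definition tuple_continuous :: "nat \<Rightarrow> ('h::metric_space list \<Rightarrow> 'h) \<Rightarrow> bool" where
  "tuple_continuous k E \<longleftrightarrow>
     (\<forall>xs. length xs = k \<longrightarrow> (\<forall>e>0. \<exists>d>0. \<forall>ys. length ys = k \<longrightarrow>
        (\<forall>i<k. dist (ys ! i) (xs ! i) < d) \<longrightarrow> dist (E ys) (E xs) < e))"

end

theory Submission
  imports Defs
begin

primrec gsF :: "(nat \<Rightarrow> 'a::real_inner) \<Rightarrow> nat \<Rightarrow> nat \<Rightarrow> 'a" where
  "gsF z 0 = (\<lambda>_. 0)"
| "gsF z (Suc n) = (gsF z n)(n := sgn (z n - (\<Sum>i<n. inner (z n) (gsF z n i) *\<^sub>R gsF z n i)))"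

definition gs :: "(nat \<Rightarrow> 'a::real_inner) \<Rightarrow> nat \<Rightarrow> 'a" where
  "gs z n = gsF z (Suc n) n"

lemma gsF_eq: "i < n \<Longrightarrow> gsF z n i = gs z i"
proof (induction n)
  case 0 then show ?case by simp
next
  case (Suc n) then show ?case
    by (cases "i = n") (auto simp: gs_def)
qed

lemma gs_rec: "gs z n = sgn (z n - (\<Sum>i<n. inner (z n) (gs z i) *\<^sub>R gs z i))"
proof -
  have "(\<Sum>i<n. inner (z n) (gsF z n i) *\<^sub>R gsF z n i) = (\<Sum>i<n. inner (z n) (gs z i) *\<^sub>R gs z i)"
    by (rule sum.cong) (auto simp: gsF_eq)
  then show ?thesis by (simp add: gs_def)
qed

lemma gs_norm: "gs z n = 0 \<or> inner (gs z n) (gs z n) = 1"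
proof -
  obtain w where g: "gs z n = sgn w" using gs_rec by blast
  have "norm (gs z n) = 0 \<or> norm (gs z n) = 1" unfolding g by (simp add: norm_sgn)
  then show ?thesis by (auto simp: power2_norm_eq_inner[symmetric])
qed

lemma sum_delta_inner:
  assumes "finite I" "k \<in> I" "\<And>i. i \<in> I \<Longrightarrow> i \<noteq> k \<Longrightarrow> g i = 0"
  shows "(\<Sum>i\<in>I. g i) = g k"
proof -
  have "(\<Sum>i\<in>I. g i) = (\<Sum>i\<in>I. if i = k then g k else 0)"
    by (rule sum.cong) (use assms in auto)
  then show ?thesis using assms by simp
qed

lemma gs_orth_aux: "\<forall>j<n. inner (gs z n) (gs z j) = 0"
proof (induction n rule: less_induct)
  case (less n)
  have orth: "inner (gs z i) (gs z j) = 0" if "i < n" "j < n" "i \<noteq> j" for i j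
  proof (cases "i < j")
    case True then show ?thesis using less[of j] that by (simp add: inner_commute)
  next
    case False then have "j < i" using that by simp
    then show ?thesis using less[of i] that by simp
  qed
  show ?case
  proof (intro allI impI)
    fix j assume j: "j < n"
    define w where "w = z n - (\<Sum>i<n. inner (z n) (gs z i) *\<^sub>R gs z i)"
    have "(\<Sum>i<n. inner (z n) (gs z i) * inner (gs z i) (gs z j))
          = inner (z n) (gs z j) * inner (gs z j) (gs z j)"
      by (rule sum_delta_inner) (use j orth in auto)
    also have "\<dots> = inner (z n) (gs z j)"
      using gs_norm[of z j] by auto
    finally have "inner w (gs z j) = 0"
      by (simp add: w_def inner_diff_left inner_sum_left)
    then show "inner (gs z n) (gs z j) = 0"
      by (simp add: gs_rec[of z n] w_def[symmetric] sgn_div_norm)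
  qed
qed

lemma gs_orth:
  assumes "i \<noteq> j" shows "inner (gs z i) (gs z j) = 0"
proof (cases "i < j")
  case True then show ?thesis using gs_orth_aux[of j z] by (simp add: inner_commute)
next
  case False then have "j < i" using assms by simp
  then show ?thesis using gs_orth_aux[of i z] by simp
qed

lemma gs_span: "z n \<in> span (gs z ` {..<Suc n})"
proof -
  define S where "S = (\<Sum>i<n. inner (z n) (gs z i) *\<^sub>R gs z i)"
  define w where "w = z n - S"
  define a where "a = norm w"
  have g: "gs z n = sgn w" using gs_rec[of z n] unfolding w_def S_def .
  have wa: "w = a *\<^sub>R gs z n"
    unfolding g a_def by (cases "w = 0") (simp_all add: sgn_div_norm)
  have "z n = w + S" by (simp add: w_def)
  then have z: "z n = a *\<^sub>R gs z n + S"
    by (simp only: wa)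
  have s1: "a *\<^sub>R gs z n \<in> span (gs z ` {..<Suc n})"
    by (rule span_mul, rule span_base) auto
  have s2: "S \<in> span (gs z ` {..<Suc n})"
    unfolding S_def
  proof (rule span_sum)
    fix i assume "i \<in> {..<n}"
    then show "inner (z n) (gs z i) *\<^sub>R gs z i \<in> span (gs z ` {..<Suc n})"
      by (intro span_mul span_base) auto
  qed
  show ?thesis unfolding z by (rule span_add[OF s1 s2])
qed


locale onseq =
  fixes e :: "nat \<Rightarrow> 'a::real_inner"
  assumes orth: "\<And>i j. i \<noteq> j \<Longrightarrow> inner (e i) (e j) = 0"
    and nrm: "\<And>i. e i = 0 \<or> inner (e i) (e i) = 1"
begin

lemma proj_orth:
  assumes "finite I" "k \<in> I"
  shows "inner (x - (\<Sum>i\<in>I. inner x (e i) *\<^sub>R e i)) (e k) = 0"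
proof -
  have "(\<Sum>i\<in>I. inner x (e i) * inner (e i) (e k)) = inner x (e k) * inner (e k) (e k)"
    by (rule sum_delta_inner) (use assms orth in auto)
  also have "\<dots> = inner x (e k)" using nrm[of k] by auto
  finally show ?thesis by (simp add: inner_diff_left inner_sum_left)
qed

lemma proj_best:
  assumes "finite I" "w \<in> span (e ` I)"
  shows "norm (x - (\<Sum>i\<in>I. inner x (e i) *\<^sub>R e i)) \<le> norm (x - w)"
proof -
  define p where "p = (\<Sum>i\<in>I. inner x (e i) *\<^sub>R e i)"
  have "p - w \<in> span (e ` I)" unfolding p_def
    by (intro span_diff span_sum span_mul span_base assms) auto
  moreover have "orthogonal (x - p) y" if "y \<in> e ` I" for y
    using that proj_orth[OF assms(1)] by (auto simp: orthogonal_def p_def)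
  ultimately have "orthogonal (x - p) (p - w)"
    by (rule orthogonal_to_span)
  then have "(norm (x - p + (p - w)))\<^sup>2 = (norm (x - p))\<^sup>2 + (norm (p - w))\<^sup>2"
    by (rule norm_add_Pythagorean)
  then have "(norm (x - p))\<^sup>2 \<le> (norm (x - w))\<^sup>2" by simp
  then show ?thesis unfolding p_def by (simp add: power_mono_iff)
qed

lemma sum_norm2:
  assumes "finite I"
  shows "(norm (\<Sum>i\<in>I. c i *\<^sub>R e i))\<^sup>2 = (\<Sum>i\<in>I. (c i)\<^sup>2 * inner (e i) (e i))"
proof -
  have "(norm (\<Sum>i\<in>I. c i *\<^sub>R e i))\<^sup>2 = (\<Sum>i\<in>I. \<Sum>j\<in>I. c i * c j * inner (e i) (e j))"
    by (simp add: power2_norm_eq_inner inner_sum_left inner_sum_right sum_distrib_left inner_commute ac_simps)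
  also have "\<dots> = (\<Sum>i\<in>I. (c i)\<^sup>2 * inner (e i) (e i))"
  proof (rule sum.cong[OF refl])
    fix i assume "i \<in> I"
    show "(\<Sum>j\<in>I. c i * c j * inner (e i) (e j)) = (c i)\<^sup>2 * inner (e i) (e i)"
      by (subst sum_delta_inner[where k=i]) (use assms \<open>i \<in> I\<close> orth in \<open>auto simp: power2_eq_square\<close>)
  qed
  finally show ?thesis .
qed

end


lemma riesz:
  fixes e :: "nat \<Rightarrow> 'a::{real_inner,complete_space}" and \<phi> :: "'a \<Rightarrow> real"
  assumes on: "onseq e"
    and dense: "\<And>x \<epsilon>. \<epsilon> > 0 \<Longrightarrow> \<exists>w\<in>span (range e). dist x w < \<epsilon>"
    and bl: "bounded_linear \<phi>"
  shows "\<exists>u. \<forall>f. \<phi> f = inner f u"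
proof -
  interpret onseq e by (rule on)
  have lin: "linear \<phi>" using bl by (rule bounded_linear.linear)
  obtain K where K: "\<And>x. norm (\<phi> x) \<le> norm x * K" "K > 0"
    using bounded_linear.pos_bounded[OF bl] by blast
  define c where "c j = \<phi> (e j)" for j
  have csq: "(c j)\<^sup>2 * inner (e j) (e j) = (c j)\<^sup>2" for j
    using nrm[of j] by (auto simp: c_def linear_0[OF lin])
  have n2: "(norm (\<Sum>j\<in>I. c j *\<^sub>R e j))\<^sup>2 = (\<Sum>j\<in>I. (c j)\<^sup>2)" if "finite I" for I
    using sum_norm2[OF that, of c] csq by simp
  have ph: "\<phi> (\<Sum>j\<in>I. c j *\<^sub>R e j) = (\<Sum>j\<in>I. (c j)\<^sup>2)" for I
    by (simp add: linear_sum[OF lin] linear_scale[OF lin] c_def power2_eq_square)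
  have bnd: "(\<Sum>j<n. (c j)\<^sup>2) \<le> K\<^sup>2" for n
  proof -
    define v where "v = (\<Sum>j<n. c j *\<^sub>R e j)"
    have "(norm v)\<^sup>2 = \<phi> v" unfolding v_def by (simp add: n2 ph)
    also have "\<dots> \<le> norm v * K" using K(1)[of v] by simp
    finally have "(norm v)\<^sup>2 \<le> norm v * K" .
    then have "norm v \<le> K"
      using K(2) by (cases "norm v = 0") (auto simp: power2_eq_square)
    then have "(norm v)\<^sup>2 \<le> K\<^sup>2" by (simp add: power_mono)
    then show ?thesis unfolding v_def by (simp add: n2)
  qed
  have sc2: "summable (\<lambda>j. (c j)\<^sup>2)"
    by (rule summableI_nonneg_bounded[OF _ bnd]) simp
  define U where "U n = (\<Sum>j<n. c j *\<^sub>R e j)" for n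
  have Udiff: "dist (U m) (U n) = norm (\<Sum>j\<in>{m..<n}. c j *\<^sub>R e j)" if "m \<le> n" for m n
  proof -
    have "U n - U m = (\<Sum>j\<in>{m..<n}. c j *\<^sub>R e j)"
      using that unfolding U_def by (simp add: atLeast0LessThan[symmetric] sum_diff_nat_ivl)
    have "dist (U m) (U n) = norm (U n - U m)" by (simp add: dist_norm norm_minus_commute)
    then show ?thesis using \<open>U n - U m = _\<close> by simp
  qed
  have "Cauchy U"
  proof (rule CauchyI')
    fix \<epsilon> :: real assume "\<epsilon> > 0"
    then obtain N where N: "\<And>m n. m \<ge> N \<Longrightarrow> norm (\<Sum>j\<in>{m..<n}. (c j)\<^sup>2) < \<epsilon>\<^sup>2"
      using sc2[unfolded summable_Cauchy] by (meson zero_less_power)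
    show "\<exists>M. \<forall>m\<ge>M. \<forall>n>m. dist (U m) (U n) < \<epsilon>"
    proof (intro exI allI impI)
      fix m n assume "m \<ge> N" "n > m"
      have "(norm (\<Sum>j\<in>{m..<n}. c j *\<^sub>R e j))\<^sup>2 < \<epsilon>\<^sup>2"
        using N[OF \<open>m \<ge> N\<close>, of n] by (simp add: n2)
      then show "dist (U m) (U n) < \<epsilon>"
        using \<open>\<epsilon> > 0\<close> Udiff[of m n] \<open>n > m\<close> by (simp add: power2_less_imp_less)
    qed
  qed
  then obtain u where uL: "U \<longlonglongrightarrow> u"
    using Cauchy_convergent convergent_def by blast
  have ue: "inner (e k) u = c k" for k
  proof -
    have "(\<lambda>n. inner (e k) (U n)) \<longlonglongrightarrow> inner (e k) u"
      by (intro tendsto_intros uL)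
    moreover have "inner (e k) (U n) = c k" if "n > k" for n
    proof -
      have "inner (e k) (U n) = (\<Sum>j<n. c j * inner (e k) (e j))"
        by (simp add: U_def inner_sum_right)
      also have "\<dots> = c k * inner (e k) (e k)"
        by (rule sum_delta_inner) (use that orth in auto)
      also have "\<dots> = c k" using nrm[of k] by (auto simp: c_def linear_0[OF lin])
      finally show ?thesis .
    qed
    then have "eventually (\<lambda>n. inner (e k) (U n) = c k) sequentially"
      by (meson eventually_sequentially Suc_le_eq)
    then have "(\<lambda>n. inner (e k) (U n)) \<longlonglongrightarrow> c k"
      by (rule tendsto_eventually)
    ultimately show ?thesis by (rule LIMSEQ_unique)
  qed
  have span_eq: "\<phi> w = inner w u" if "w \<in> span (range e)" for w
  proof -
    have l2: "linear (\<lambda>w. inner w u)" by (simp add: bounded_linear.linear bounded_linear_inner_left)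
    show ?thesis
      by (rule linear_eq_on_span[OF lin l2 _ that]) (use ue in \<open>auto simp: c_def inner_commute\<close>)
  qed
  have "\<phi> f = inner f u" for f
  proof (rule ccontr)
    assume ne: "\<phi> f \<noteq> inner f u"
    define d where "d = \<bar>\<phi> f - inner f u\<bar>"
    have d: "d > 0" using ne by (simp add: d_def)
    obtain w where w: "w \<in> span (range e)" "dist f w < d / (K + norm u + 1)"
    proof -
      have "d / (K + norm u + 1) > 0" using d K(2) by (simp add: add_pos_nonneg)
      then show ?thesis using dense[of "d / (K + norm u + 1)" f] that by blast
    qed
    have "d = \<bar>\<phi> (f - w) - inner (f - w) u\<bar>"
      using span_eq[OF w(1)] by (simp add: d_def linear_diff[OF lin] inner_diff_left)
    also have "\<dots> \<le> \<bar>\<phi> (f - w)\<bar> + \<bar>inner (f - w) u\<bar>" by linarith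
    also have "\<dots> \<le> norm (f - w) * K + norm (f - w) * norm u"
      using K(1)[of "f - w"] Cauchy_Schwarz_ineq2[of "f - w" u] by simp
    also have "\<dots> \<le> norm (f - w) * (K + norm u + 1)"
      by (simp add: algebra_simps)
    also have "\<dots> < d"
    proof -
      have "0 < K + norm u + 1" using K(2) by (simp add: add_pos_nonneg)
      then show ?thesis using w(2) by (simp add: dist_norm pos_less_divide_eq)
    qed
    finally show False by simp
  qed
  then show ?thesis by blast
qed



lemma tc_seq:
  fixes E :: "'h::real_normed_vector list \<Rightarrow> 'h"
  assumes H: "\<And>xs X. length xs = k \<Longrightarrow> (\<And>m. length (X m) = k) \<Longrightarrow>
      (\<And>i. i < k \<Longrightarrow> (\<lambda>m. X m ! i) \<longlonglongrightarrow> xs ! i) \<Longrightarrow> (\<lambda>m. E (X m)) \<longlonglongrightarrow> E xs"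
  shows "tuple_continuous k E"
  unfolding tuple_continuous_def
proof (intro allI impI)
  fix xs :: "'h list" and \<epsilon> :: real
  assume len: "length xs = k" and ep: "\<epsilon> > 0"
  show "\<exists>d>0. \<forall>ys. length ys = k \<longrightarrow> (\<forall>i<k. dist (ys ! i) (xs ! i) < d) \<longrightarrow> dist (E ys) (E xs) < \<epsilon>"
  proof (rule ccontr)
    assume neg: "\<not> ?thesis"
    have "\<forall>m::nat. \<exists>ys. length ys = k \<and> (\<forall>i<k. dist (ys ! i) (xs ! i) < inverse (real (Suc m))) \<and> \<not> dist (E ys) (E xs) < \<epsilon>"
    proof
      fix m :: nat
      have "inverse (real (Suc m)) > 0" by simp
      then show "\<exists>ys. length ys = k \<and> (\<forall>i<k. dist (ys ! i) (xs ! i) < inverse (real (Suc m))) \<and> \<not> dist (E ys) (E xs) < \<epsilon>"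
        using neg by blast
    qed
    from choice[OF this] obtain X where "\<forall>m. length (X m) = k \<and> (\<forall>i<k. dist (X m ! i) (xs ! i) < inverse (real (Suc m))) \<and> \<not> dist (E (X m)) (E xs) < \<epsilon>"
      ..
    then have X: "\<And>m. length (X m) = k"
      "\<And>m i. i < k \<Longrightarrow> dist (X m ! i) (xs ! i) < inverse (real (Suc m))"
      "\<And>m. \<not> dist (E (X m)) (E xs) < \<epsilon>"
      by auto
    have "(\<lambda>m. X m ! i) \<longlonglongrightarrow> xs ! i" if "i < k" for i
    proof (rule LIMSEQ_I)
      fix r :: real assume "r > 0"
      then obtain N where N: "inverse (real (Suc N)) < r"
        using reals_Archimedean by blast
      show "\<exists>no. \<forall>m\<ge>no. norm (X m ! i - xs ! i) < r"
      proof (intro exI allI impI)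
        fix m assume "m \<ge> N"
        then have "inverse (real (Suc m)) \<le> inverse (real (Suc N))"
          by (simp add: le_imp_inverse_le)
        then have "dist (X m ! i) (xs ! i) < r"
          using X(2)[OF that, of m] N by linarith
        then show "norm (X m ! i - xs ! i) < r"
          by (simp add: dist_norm)
      qed
    qed
    then have "(\<lambda>m. E (X m)) \<longlonglongrightarrow> E xs" by (rule H[OF len X(1)])
    then have "eventually (\<lambda>m. dist (E (X m)) (E xs) < \<epsilon>) sequentially"
      using ep by (rule tendstoD)
    then show False using X(3) by (simp add: eventually_sequentially)
  qed
qed

lemma nl_lim:
  fixes S :: "nat \<Rightarrow> 'h::real_normed_vector \<Rightarrow> 'h"
  assumes "\<And>\<epsilon>. \<epsilon> > 0 \<Longrightarrow> eventually (\<lambda>n. \<forall>f\<in>cball 0 1. norm (S n f) \<le> \<epsilon>) sequentially"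
  shows "(\<lambda>n. nl_opnorm (S n)) \<longlonglongrightarrow> 0"
proof (rule order_tendstoI)
  fix a :: ereal assume "a < 0"
  have le0: "ereal (norm (S n 0)) \<le> nl_opnorm (S n)" for n
    unfolding nl_opnorm_def by (rule SUP_upper) simp
  have "a < nl_opnorm (S n)" for n
  proof -
    have "a < ereal (norm (S n 0))"
      using \<open>a < 0\<close> by (rule less_le_trans) simp
    then show ?thesis using le0[of n] by (rule less_le_trans)
  qed
  then show "eventually (\<lambda>n. a < nl_opnorm (S n)) sequentially" by simp
next
  fix a :: ereal assume "0 < a"
  then obtain z where z: "0 < ereal z" "ereal z < a" using ereal_dense2 by blast
  then have "z > 0" by simp
  show "eventually (\<lambda>n. nl_opnorm (S n) < a) sequentially"
    using assms[OF \<open>z > 0\<close>]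
  proof eventually_elim
    case (elim n)
    have "nl_opnorm (S n) \<le> ereal z"
      unfolding nl_opnorm_def by (rule SUP_least) (use elim in simp)
    then show ?case using z(2) by simp
  qed
qed


lemma main:
  fixes Gc :: "'g set"
    and act :: "'g \<Rightarrow> 'h::{real_inner, complete_space} \<Rightarrow> 'h"
    and T :: "'h \<Rightarrow> 'h"
  assumes sep: "separable_space (euclidean :: 'h topology)"
    and lin: "\<And>g. g \<in> Gc \<Longrightarrow> linear (act g)"
    and inner_inv: "\<And>g f1 f2. g \<in> Gc \<Longrightarrow> inner (act g f1) (act g f2) = inner f1 f2"
    and T_bl: "bounded_linear T"
    and T_cpt: "compact_operator T"
  shows "\<exists>(E :: nat \<Rightarrow> 'h list \<Rightarrow> 'h) (t :: nat \<Rightarrow> 'h).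
           (\<forall>n\<ge>1. tuple_continuous (2 * n + 1) (E n)) \<and>
           (\<forall>n\<ge>1. \<forall>g\<in>Gc. \<forall>fs. length fs = 2 * n + 1 \<longrightarrow>
                E n (map (act g) fs) = act g (E n fs)) \<and>
           ((\<lambda>n. nl_opnorm (\<lambda>f. T f - E n (f # map t [1..<2 * n + 1]))) \<longlonglongrightarrow> 0)"
proof -
  obtain C :: "'h set" where C: "countable C" "closure C = UNIV"
    using sep by (auto simp: separable_space_def euclidean_closure_of)
  have "C \<noteq> {}" using C(2) by auto
  define z where "z = from_nat_into C"
  have rz: "range z = C" unfolding z_def using range_from_nat_into[OF \<open>C \<noteq> {}\<close> C(1)] .
  have zdense: "\<exists>n. dist (z n) x < \<epsilon>" if ep0: "\<epsilon> > 0" for x \<epsilon>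
  proof -
    have "x \<in> closure C" using C(2) by simp
    then obtain y where "y \<in> C" "dist y x < \<epsilon>" using ep0 closure_approachable by blast
    then show ?thesis using rz by blast
  qed
  define e where "e = gs z"
  interpret onseq e
    by unfold_locales (auto simp: e_def gs_orth gs_norm)
  have on: "onseq e" by unfold_locales
  have zspan: "z j \<in> span (e ` {..<n})" if "j < n" for j n
  proof -
    have "e ` {..<Suc j} \<subseteq> e ` {..<n}" using that by auto
    then show ?thesis using gs_span[of z j] span_mono unfolding e_def by blast
  qed
  have rdense: "\<exists>w\<in>span (range e). dist x w < \<epsilon>" if ep1: "\<epsilon> > 0" for x \<epsilon>
  proof -
    obtain n where "dist (z n) x < \<epsilon>" using zdense[OF ep1] by blast
    moreover have "z n \<in> span (range e)"
      using zspan[of n "Suc n"] span_mono[of "e ` {..<Suc n}" "range e"] by auto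
    ultimately show ?thesis by (auto simp: dist_commute)
  qed
  have "\<exists>v. \<forall>f. inner (T f) (e i) = inner f v" for i
    by (rule riesz[OF on rdense]) (auto intro: bounded_linear_compose[OF bounded_linear_inner_left T_bl])
  then have "\<forall>i. \<exists>v. \<forall>f. inner (T f) (e i) = inner f v" by blast
  from choice[OF this] obtain u where "\<forall>i. \<forall>f. inner (T f) (e i) = inner f (u i)" ..
  then have u: "\<And>i f. inner (T f) (e i) = inner f (u i)" by blast
  define E :: "nat \<Rightarrow> 'h list \<Rightarrow> 'h" where
    "E n fs = (\<Sum>i<n. inner (fs ! 0) (fs ! Suc (2 * i)) *\<^sub>R fs ! Suc (Suc (2 * i)))" for n fs
  define t :: "nat \<Rightarrow> 'h" where "t j = (if odd j then u (j div 2) else e (j div 2 - 1))" for j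
  have Eval: "E n (f # map t [1..<2 * n + 1]) = (\<Sum>i<n. inner (T f) (e i) *\<^sub>R e i)" for n f
    unfolding E_def
  proof (rule sum.cong[OF refl])
    fix i assume "i \<in> {..<n}"
    then have i: "i < n" by simp
    have a: "map t [1..<2 * n + 1] ! (2 * i) = u i"
      using i by (simp add: t_def nth_map nth_upt del: upt_Suc)
    have b: "map t [1..<2 * n + 1] ! Suc (2 * i) = e i"
      using i by (simp add: t_def nth_map nth_upt del: upt_Suc)
    show "inner ((f # map t [1..<2 * n + 1]) ! 0) ((f # map t [1..<2 * n + 1]) ! Suc (2 * i)) *\<^sub>R
          (f # map t [1..<2 * n + 1]) ! Suc (Suc (2 * i)) = inner (T f) (e i) *\<^sub>R e i"
      using a b by (simp add: u)
  qed
  have cont: "tuple_continuous (2 * n + 1) (E n)" for n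
  proof (rule tc_seq)
    fix xs :: "'h list" and X :: "nat \<Rightarrow> 'h list" assume len: "length xs = 2 * n + 1" and lX: "\<And>m. length (X m) = 2 * n + 1"
      and conv: "\<And>i. i < 2 * n + 1 \<Longrightarrow> (\<lambda>m. X m ! i) \<longlonglongrightarrow> xs ! i"
    show "(\<lambda>m. E n (X m)) \<longlonglongrightarrow> E n xs"
      unfolding E_def
      by (intro tendsto_sum tendsto_scaleR tendsto_inner conv) auto
  qed
  have equi: "E n (map (act g) fs) = act g (E n fs)" if "g \<in> Gc" "length fs = 2 * n + 1" for n g fs
  proof -
    have lg: "linear (act g)" using lin[OF that(1)] .
    have "E n (map (act g) fs) = (\<Sum>i<n. inner (fs ! 0) (fs ! Suc (2 * i)) *\<^sub>R act g (fs ! Suc (Suc (2 * i))))"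
      unfolding E_def
    proof (rule sum.cong[OF refl])
      fix i assume i: "i \<in> {..<n}"
      show "inner (map (act g) fs ! 0) (map (act g) fs ! Suc (2 * i)) *\<^sub>R map (act g) fs ! Suc (Suc (2 * i))
          = inner (fs ! 0) (fs ! Suc (2 * i)) *\<^sub>R act g (fs ! Suc (Suc (2 * i)))"
        using that i by (simp add: nth_map inner_inv)
    qed
    also have "\<dots> = act g (E n fs)"
      unfolding E_def by (simp add: linear_sum[OF lg] linear_scale[OF lg])
    finally show ?thesis .
  qed
  have conv: "(\<lambda>n. nl_opnorm (\<lambda>f. T f - E n (f # map t [1..<2 * n + 1]))) \<longlonglongrightarrow> 0"
  proof (rule nl_lim)
    fix \<epsilon> :: real assume ep: "\<epsilon> > 0"
    define K where "K = closure (T ` cball 0 1)"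
    have "compact K" using T_cpt bounded_cball unfolding compact_operator_def K_def by blast
    then obtain k where k: "finite k" "k \<subseteq> K" "K \<subseteq> (\<Union>x\<in>k. ball x (\<epsilon>/3))"
    proof -
      have "\<epsilon>/3 > 0" using ep by simp
      then show ?thesis using seq_compact_imp_totally_bounded[OF compact_imp_seq_compact[OF \<open>compact K\<close>]] that by blast
    qed
    have "\<forall>y\<in>k. \<exists>m. dist (z m) y < \<epsilon>/3" using zdense[of "\<epsilon>/3"] ep by simp
    from bchoice[OF this] obtain ny where "\<forall>y\<in>k. dist (z (ny y)) y < \<epsilon>/3" ..
    then have ny: "\<And>y. y \<in> k \<Longrightarrow> dist (z (ny y)) y < \<epsilon>/3" by blast
    define N where "N = Suc (Max (ny ` k))"
    have nyN: "ny y < N" if "y \<in> k" for y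
    proof -
      have "ny y \<le> Max (ny ` k)" using that k(1) by (intro Max_ge) auto
      then show ?thesis by (simp add: N_def)
    qed
    show "eventually (\<lambda>n. \<forall>f\<in>cball 0 1. norm (T f - E n (f # map t [1..<2 * n + 1])) \<le> \<epsilon>) sequentially"
      unfolding eventually_sequentially
    proof (intro exI allI impI ballI)
      fix n f assume nN: "N \<le> n" and f: "f \<in> cball (0::'h) 1"
      have "T f \<in> K" unfolding K_def using f by (intro closure_subset[THEN subsetD] imageI)
      then obtain y where y0: "y \<in> k" "T f \<in> ball y (\<epsilon>/3)" using k(3) by blast
      then have y: "y \<in> k" "dist y (T f) < \<epsilon>/3" by simp_all
      have w: "z (ny y) \<in> span (e ` {..<n})" using nyN[OF y(1)] nN by (intro zspan) simp
      have "norm (T f - E n (f # map t [1..<2 * n + 1])) \<le> norm (T f - z (ny y))"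
        unfolding Eval by (rule proj_best[OF finite_lessThan w])
      also have "\<dots> = dist (T f) (z (ny y))" by (simp add: dist_norm)
      also have "\<dots> \<le> dist (T f) y + dist y (z (ny y))" by (rule dist_triangle)
      also have "\<dots> < \<epsilon>"
      proof -
        have "dist y (z (ny y)) < \<epsilon>/3" using ny[OF y(1)] by (simp add: dist_commute)
        moreover have "dist (T f) y < \<epsilon>/3" using y(2) by (simp add: dist_commute)
        ultimately show ?thesis using ep by linarith
      qed
      finally show "norm (T f - E n (f # map t [1..<2 * n + 1])) \<le> \<epsilon>" by simp
    qed
  qed
  show ?thesis
  proof (intro exI conjI)
    show "\<forall>n\<ge>1. tuple_continuous (2 * n + 1) (E n)" using cont by simp
    show "\<forall>n\<ge>1. \<forall>g\<in>Gc. \<forall>fs. length fs = 2 * n + 1 \<longrightarrow> E n (map (act g) fs) = act g (E n fs)"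
      using equi by simp
    show "(\<lambda>n. nl_opnorm (\<lambda>f. T f - E n (f # map t [1..<2 * n + 1]))) \<longlonglongrightarrow> 0" by (rule conv)
  qed
qed

theorem theorem2:
  fixes G :: "('g, 'b) monoid_scheme"
    and act :: "'g \<Rightarrow> 'h::{real_inner, complete_space} \<Rightarrow> 'h"
    and T :: "'h \<Rightarrow> 'h"
  assumes sep: "separable_space (euclidean :: 'h topology)"
    and grp: "group G"
    and lin: "\<And>g. g \<in> carrier G \<Longrightarrow> linear (act g)"
    and act_one: "\<And>f. act \<one>\<^bsub>G\<^esub> f = f"
    and act_mult: "\<And>g h f. g \<in> carrier G \<Longrightarrow> h \<in> carrier G \<Longrightarrow>
                      act h (act g f) = act (h \<otimes>\<^bsub>G\<^esub> g) f"
    and inner_inv: "\<And>g f1 f2. g \<in> carrier G \<Longrightarrow> inner (act g f1) (act g f2) = inner f1 f2"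
    and T_bl: "bounded_linear T"
    and T_cpt: "compact_operator T"
  shows "\<exists>(E :: nat \<Rightarrow> 'h list \<Rightarrow> 'h) (t :: nat \<Rightarrow> 'h).
           (\<forall>n\<ge>1. tuple_continuous (2 * n + 1) (E n)) \<and>
           (\<forall>n\<ge>1. \<forall>g\<in>carrier G. \<forall>fs. length fs = 2 * n + 1 \<longrightarrow>
                E n (map (act g) fs) = act g (E n fs)) \<and>
           ((\<lambda>n. nl_opnorm (\<lambda>f. T f - E n (f # map t [1..<2 * n + 1]))) \<longlonglongrightarrow> 0)"
  using main[of "carrier G" act T, OF sep lin inner_inv T_bl T_cpt] .

end
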